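(* Let $n\geq3$ be odd. Let $\mathcal{Q}$ be the set of partitions $p$ of $\{1,\dots,n\}$ such that one block of $p$ has odd cardinality and all other blocks have cardinality $2$. For $p\in\mathcal{Q}$ let $\varepsilon''(p)=(-1)^{\frac12(|I|-1)}$, where $I$ is the odd block of $p$. Then $\sum_{p\in\mathcal{Q}}\varepsilon(p)\varepsilon''(p)=0$.
   Context: For an ordered partition $P=(I_1,\dots,I_k)$ of $\{1,\dots,n\}$ into nonempty blocks with $n_i=|I_i|$, $\sigma_P\in\mathfrak{S}_n$ is the unique permutation such that $\sigma_P^{-1}$ maps $\{n_1+\dots+n_i+1,\dots,n_1+\dots+n_{i+1}\}$ increasingly onto $I_{i+1}$, and $\varepsilon(P)=\mathrm{sgn}(\sigma_P)$. For a partition $p$ with at most one block of odd cardinality, $\varepsilon(P)$ does not depend on the ordering $P$ of the blocks of $p$, and this common value is $\varepsilon(p)$. *)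

theory Defs
  imports "HOL-Combinatorics.Permutations" "HOL-Library.Disjoint_Sets"
begin

text \<open>An ordered partition of {1..n} is a list Is of blocks.\<close>
definition sigmaP_inv :: "nat \<Rightarrow> nat set list \<Rightarrow> nat \<Rightarrow> nat" where
  "sigmaP_inv n Is = (\<lambda>j. if j \<in> {1..n} then concat (map sorted_list_of_set Is) ! (j - 1) else j)"

definition sigmaP :: "nat \<Rightarrow> nat set list \<Rightarrow> nat \<Rightarrow> nat" where
  "sigmaP n Is = inv (sigmaP_inv n Is)"

definition eps_ord :: "nat \<Rightarrow> nat set list \<Rightarrow> int" where
  "eps_ord n Is = sign (sigmaP n Is)"

text \<open>epsilon of an (unordered) partition: epsilon of some ordering of its blocks
  (well defined when at most one block is odd).\<close>
definition eps_part :: "nat \<Rightarrow> nat set set \<Rightarrow> int" where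
  "eps_part n p = eps_ord n (SOME Is. distinct Is \<and> set Is = p)"

definition odd_block :: "nat set set \<Rightarrow> nat set" where
  "odd_block p = (THE I. I \<in> p \<and> odd (card I))"

definition eps2 :: "nat set set \<Rightarrow> int" where
  "eps2 p = (-1) ^ ((card (odd_block p) - 1) div 2)"

definition Qset :: "nat \<Rightarrow> nat set set set" where
  "Qset n = {p. partition_on {1..n} p \<and>
      (\<exists>I\<in>p. odd (card I) \<and> (\<forall>J\<in>p. J \<noteq> I \<longrightarrow> card J = 2))}"

end

theory Submission
  imports Defs
begin

definition pl :: "nat \<Rightarrow> nat list \<Rightarrow> nat \<Rightarrow> nat" where
  "pl n xs = (\<lambda>j. if j \<in> {1..n} then xs ! (j - 1) else j)"

definition good :: "nat \<Rightarrow> nat list \<Rightarrow> bool" where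
  "good n xs \<longleftrightarrow> distinct xs \<and> set xs = {1..n}"

lemma good_length: "good n xs \<Longrightarrow> length xs = n"
  unfolding good_def by (metis card_atLeastAtMost diff_Suc_1 distinct_card)

lemma pl_permutes:
  assumes "good n xs" shows "pl n xs permutes {1..n}"
proof (rule bij_imp_permutes)
  have len: "length xs = n" using good_length[OF assms] .
  show "bij_betw (pl n xs) {1..n} {1..n}"
  proof (rule bij_betw_imageI)
    show "inj_on (pl n xs) {1..n}"
    proof
      fix i j assume i: "i \<in> {1..n}" and j: "j \<in> {1..n}" and e: "pl n xs i = pl n xs j"
      then have "xs ! (i - 1) = xs ! (j - 1)" by (simp add: pl_def)
      moreover have "i - 1 < length xs" "j - 1 < length xs" using i j len by auto
      ultimately have "i - 1 = j - 1" using assms unfolding good_def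
        using nth_eq_iff_index_eq by blast
      then show "i = j" using i j by auto
    qed
    show "pl n xs ` {1..n} = {1..n}"
    proof -
      have "pl n xs ` {1..n} = (\<lambda>i. xs ! i) ` {..<n}"
      proof (rule set_eqI, rule iffI)
        fix y assume "y \<in> pl n xs ` {1..n}"
        then obtain i where "i \<in> {1..n}" "y = xs ! (i - 1)" by (auto simp: pl_def)
        then show "y \<in> (\<lambda>i. xs ! i) ` {..<n}" by force
      next
        fix y assume "y \<in> (\<lambda>i. xs ! i) ` {..<n}"
        then obtain i where "i < n" "y = xs ! i" by auto
        then have "Suc i \<in> {1..n}" "y = pl n xs (Suc i)" by (auto simp: pl_def)
        then show "y \<in> pl n xs ` {1..n}" by blast
      qed
      also have "\<dots> = set xs" using len by (auto simp: set_conv_nth)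
      finally show ?thesis using assms by (simp add: good_def)
    qed
  qed
  show "pl n xs x = x" if "x \<notin> {1..n}" for x using that unfolding pl_def by auto
qed

lemma pl_perm: "good n xs \<Longrightarrow> permutation (pl n xs)"
  using pl_permutes permutation_permutes by blast

definition lsign :: "nat \<Rightarrow> nat list \<Rightarrow> int" where
  "lsign n xs = sign (pl n xs)"

lemma good_perm: "good n xs \<Longrightarrow> mset ys = mset xs \<Longrightarrow> good n ys"
  unfolding good_def by (metis mset_eq_setD mset_eq_imp_distinct_iff)

lemma adj_swap:
  assumes g: "good n (A @ [x, y] @ D)"
  shows "lsign n (A @ [y, x] @ D) = - lsign n (A @ [x, y] @ D)"
proof -
  let ?k = "length A"
  have len: "length (A @ [x, y] @ D) = n" using good_length[OF g] .
  have g2: "good n (A @ [y, x] @ D)" by (rule good_perm[OF g]) simp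
  have eq: "pl n (A @ [y, x] @ D) = pl n (A @ [x, y] @ D) \<circ> transpose (?k + 1) (?k + 2)"
  proof
    fix j
    show "pl n (A @ [y, x] @ D) j = (pl n (A @ [x, y] @ D) \<circ> transpose (?k + 1) (?k + 2)) j"
      using len
      by (cases "j = ?k + 1"; cases "j = ?k + 2")
         (auto simp: pl_def nth_append transpose_def nth_Cons split: nat.splits)
  qed
  have "lsign n (A @ [y, x] @ D) = sign (pl n (A @ [x, y] @ D)) * sign (transpose (?k + 1) (?k + 2))"
    unfolding lsign_def eq
    by (rule sign_compose[OF pl_perm[OF g]]) (simp add: permutation_swap_id)
  then show ?thesis by (simp add: sign_swap_id lsign_def)
qed

lemma move1:
  "good n (A @ [x] @ C @ D) \<Longrightarrow> lsign n (A @ C @ [x] @ D) = (-1) ^ length C * lsign n (A @ [x] @ C @ D)"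
proof (induction C arbitrary: A)
  case Nil then show ?case by simp
next
  case (Cons y C)
  have g1: "good n ((A @ [y]) @ [x] @ C @ D)" by (rule good_perm[OF Cons.prems]) simp
  have s: "lsign n (A @ [y, x] @ (C @ D)) = - lsign n (A @ [x, y] @ (C @ D))"
    by (rule adj_swap) (use Cons.prems in simp)
  have "lsign n (A @ (y # C) @ [x] @ D) = lsign n ((A @ [y]) @ C @ [x] @ D)" by simp
  also have "\<dots> = (-1) ^ length C * lsign n ((A @ [y]) @ [x] @ C @ D)" by (rule Cons.IH[OF g1])
  also have "\<dots> = (-1) ^ length (y # C) * lsign n (A @ [x] @ (y # C) @ D)"
    using s by simp
  finally show ?case .
qed

lemma move_block:
  "good n (A @ X @ C @ D) \<Longrightarrow> lsign n (A @ C @ X @ D) = (-1) ^ (length X * length C) * lsign n (A @ X @ C @ D)"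
proof (induction X arbitrary: A)
  case Nil then show ?case by simp
next
  case (Cons x X)
  have g1: "good n ((A @ [x]) @ X @ C @ D)" using Cons.prems by simp
  have ih: "lsign n ((A @ [x]) @ C @ X @ D) = (-1) ^ (length X * length C) * lsign n ((A @ [x]) @ X @ C @ D)"
    by (rule Cons.IH[OF g1])
  have g2: "good n (A @ [x] @ C @ (X @ D))" by (rule good_perm[OF Cons.prems]) simp
  have m: "lsign n (A @ C @ [x] @ (X @ D)) = (-1) ^ length C * lsign n (A @ [x] @ C @ (X @ D))"
    by (rule move1[OF g2])
  show ?case using ih m by (simp add: power_add algebra_simps)
qed

definition L :: "nat set list \<Rightarrow> nat list" where
  "L Is = concat (map sorted_list_of_set Is)"

definition pe :: "nat set set \<Rightarrow> bool" where
  "pe B \<longleftrightarrow> (\<forall>X\<in>B. \<forall>Y\<in>B. X \<noteq> Y \<longrightarrow> even (card X) \<or> even (card Y))"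

lemma L_append[simp]: "L (xs @ ys) = L xs @ L ys" and L_Cons[simp]: "L (x # xs) = sorted_list_of_set x @ L xs"
  and L_Nil[simp]: "L [] = []"
  by (simp_all add: L_def)

lemma even_len_L: "(\<forall>X\<in>set P. even (card X)) \<Longrightarrow> even (length (L P))"
  by (induction P) (auto simp: length_sorted_list_of_set)

lemma reorder:
  "distinct Js \<Longrightarrow> distinct Is \<Longrightarrow> set Is = set Js \<Longrightarrow> pe (set Is) \<Longrightarrow> good n (A @ L Is)
   \<Longrightarrow> lsign n (A @ L Is) = lsign n (A @ L Js)"
proof (induction Js arbitrary: A Is)
  case Nil then show ?case by simp
next
  case (Cons J Js)
  have "J \<in> set Is" using Cons.prems by simp
  then obtain P R where Is: "Is = P @ J # R" by (meson split_list)
  have g0: "good n (A @ L P @ sorted_list_of_set J @ L R)" using Cons.prems Is by simp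
  have g1: "good n (A @ sorted_list_of_set J @ L P @ L R)" by (rule good_perm[OF g0]) (simp add: ac_simps)
  have ev: "even (card J * length (L P))"
  proof (cases "even (card J)")
    case False
    have "\<forall>X\<in>set P. even (card X)"
    proof
      fix X assume X: "X \<in> set P"
      then have "X \<noteq> J" using Cons.prems(2) Is by auto
      then show "even (card X)" using False Cons.prems(4) X Is unfolding pe_def by auto
    qed
    then show ?thesis using even_len_L by simp
  qed simp
  have "lsign n (A @ L Is) = lsign n (A @ L P @ sorted_list_of_set J @ L R)" using Is by simp
  also have "\<dots> = lsign n (A @ sorted_list_of_set J @ L P @ L R)"
    using move_block[OF g1] ev by simp
  also have "\<dots> = lsign n ((A @ sorted_list_of_set J) @ L (P @ R))" by simp
  also have "\<dots> = lsign n ((A @ sorted_list_of_set J) @ L Js)"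
  proof (rule Cons.IH)
    show "distinct Js" using Cons.prems by simp
    show "distinct (P @ R)" using Cons.prems Is by simp
    show "set (P @ R) = set Js" using Cons.prems Is by auto
    show "pe (set (P @ R))" using Cons.prems(4) Is unfolding pe_def by auto
    show "good n ((A @ sorted_list_of_set J) @ L (P @ R))" using g1 by simp
  qed
  also have "\<dots> = lsign n (A @ L (J # Js))" by simp
  finally show ?case .
qed


lemma part_blocks: "partition_on {1..n::nat} p \<Longrightarrow> X \<in> p \<Longrightarrow> X \<subseteq> {1..n} \<and> finite X \<and> X \<noteq> {}"
proof -
  assume a: "partition_on {1..n} p" "X \<in> p"
  then have "X \<subseteq> {1..n}" using partition_onD1[OF a(1)] by blast
  then show ?thesis using a partition_onD3[OF a(1)] by (auto intro: finite_subset)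
qed

lemma part_finite: "partition_on {1..n::nat} p \<Longrightarrow> finite p"
proof -
  assume a: "partition_on {1..n} p"
  then have "p \<subseteq> Pow {1..n}" using partition_onD1[OF a] by blast
  then show ?thesis by (rule finite_subset) simp
qed

lemma part_disj: "partition_on A p \<Longrightarrow> X \<in> p \<Longrightarrow> Y \<in> p \<Longrightarrow> X \<noteq> Y \<Longrightarrow> X \<inter> Y = {}"
  unfolding partition_on_def disjoint_def by blast

lemma good_L:
  assumes p: "partition_on {1..n} p" and d: "distinct Is" and s: "set Is = p"
  shows "good n (L Is)"
proof -
  have fin: "\<And>X. X \<in> set Is \<Longrightarrow> finite X" using part_blocks[OF p] s by blast
  have "set (L Is) = \<Union>(set Is)" using fin by (auto simp: L_def)
  also have "\<dots> = {1..n}" using p s by (simp add: partition_on_def)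
  finally have 1: "set (L Is) = {1..n}" .
  have "distinct (map sorted_list_of_set Is)"
    using d fin by (simp add: distinct_map inj_on_def) (metis sorted_list_of_set.set_sorted_key_list_of_set)
  moreover have "\<And>ys zs. ys \<in> set (map sorted_list_of_set Is) \<Longrightarrow> zs \<in> set (map sorted_list_of_set Is) \<Longrightarrow> ys \<noteq> zs \<Longrightarrow> set ys \<inter> set zs = {}"
    using fin part_disj[OF p] s by auto (metis disjoint_iff)
  ultimately have "distinct (L Is)" unfolding L_def by (intro distinct_concat) auto
  with 1 show ?thesis by (simp add: good_def)
qed

lemma eps_ord_lsign: "good n (L Is) \<Longrightarrow> eps_ord n Is = lsign n (L Is)"
proof -
  assume g: "good n (L Is)"
  have e: "sigmaP_inv n Is = pl n (L Is)" by (simp add: sigmaP_inv_def pl_def L_def)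
  show ?thesis unfolding eps_ord_def sigmaP_def lsign_def e by (rule sign_inverse[OF pl_perm[OF g]])
qed

lemma Qset_odd:
  assumes "p \<in> Qset n"
  shows "odd_block p \<in> p \<and> odd (card (odd_block p)) \<and> (\<forall>J\<in>p. J \<noteq> odd_block p \<longrightarrow> card J = 2)"
proof -
  obtain I where I: "I \<in> p" "odd (card I)" "\<forall>J\<in>p. J \<noteq> I \<longrightarrow> card J = 2"
    using assms by (auto simp: Qset_def)
  have "odd_block p = I" unfolding odd_block_def
    by (rule the_equality) (use I in auto)
  with I show ?thesis by simp
qed

lemma Qset_pe: "p \<in> Qset n \<Longrightarrow> pe p"
  using Qset_odd unfolding pe_def by (metis even_numeral)

lemma QsetI:
  assumes "partition_on {1..n} p" "I \<in> p" "odd (card I)" "\<forall>J\<in>p. J \<noteq> I \<longrightarrow> card J = 2"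
  shows "p \<in> Qset n" "odd_block p = I"
proof -
  show "p \<in> Qset n" using assms by (auto simp: Qset_def)
  show "odd_block p = I" unfolding odd_block_def
    by (rule the_equality) (use assms in auto)
qed

lemma eps_part_eq:
  assumes p: "p \<in> Qset n" and d: "distinct Is" and s: "set Is = p"
  shows "eps_part n p = lsign n (L Is)"
proof -
  have pp: "partition_on {1..n} p" using p by (simp add: Qset_def)
  have "\<exists>Is. distinct Is \<and> set Is = p" using finite_distinct_list[OF part_finite[OF pp]] by blast
  then have J: "distinct (SOME Is. distinct Is \<and> set Is = p) \<and> set (SOME Is. distinct Is \<and> set Is = p) = p"
    by (rule someI_ex)
  define Js where "Js = (SOME Is. distinct Is \<and> set Is = p)"
  have J': "distinct Js" "set Js = p" using J by (auto simp: Js_def)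
  have "eps_part n p = lsign n (L Js)"
    unfolding eps_part_def Js_def[symmetric] by (rule eps_ord_lsign[OF good_L[OF pp J']])
  also have "\<dots> = lsign n ([] @ L Is)"
    using reorder[of Is Js n "[]"] J' d s Qset_pe[OF p] good_L[OF pp J'] by simp
  finally show ?thesis by simp
qed

lemma eps2_eq: "p \<in> Qset n \<Longrightarrow> eps2 p = (-1) ^ ((card (odd_block p) - 1) div 2)"
  by (simp add: eps2_def)


abbreviation tt :: "nat \<Rightarrow> nat" where "tt \<equiv> transpose 1 2"

lemma sl_image:
  assumes "finite X" "strict_mono_on X f"
  shows "sorted_list_of_set (f ` X) = map f (sorted_list_of_set X)"
proof -
  have inj: "inj_on f X" using assms(2) by (rule strict_mono_on_imp_inj_on)
  have "sorted_wrt (<) (map f (sorted_list_of_set X))"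
    unfolding sorted_wrt_map
    by (rule sorted_wrt_mono_rel[OF _ sorted_list_of_set.strict_sorted_key_list_of_set])
       (use assms in \<open>auto simp: strict_mono_on_def\<close>)
  moreover have "set (map f (sorted_list_of_set X)) = f ` X" using assms by simp
  moreover have "length (map f (sorted_list_of_set X)) = card (f ` X)"
    using card_image[OF inj] by (simp add: length_sorted_list_of_set)
  ultimately show ?thesis
    by (intro sorted_list_of_set_unique[THEN iffD1]) (use assms in auto)
qed

lemma tt_mono: "X \<subseteq> {1..n} \<Longrightarrow> 1 \<notin> X \<or> 2 \<notin> X \<Longrightarrow> strict_mono_on X tt"
  unfolding strict_mono_on_def
proof (intro allI impI)
  fix r s assume X: "X \<subseteq> {1..n}" "1 \<notin> X \<or> 2 \<notin> X" and rs0: "r \<in> X \<and> s \<in> X \<and> r < s"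
  then have rs: "r \<in> X" "s \<in> X" "r < s" by auto
  then have "r \<ge> 1" "s \<ge> 1" using X(1) by auto
  then show "tt r < tt s" using X rs unfolding transpose_def by auto
qed

lemma L_tt: "(\<forall>X\<in>set Is. X \<subseteq> {1..n} \<and> finite X \<and> \<not> {1,2} \<subseteq> X) \<Longrightarrow> L (map ((`) tt) Is) = map tt (L Is)"
  proof (induction Is)
  case (Cons X Is)
  then have "X \<subseteq> {1..n}" "finite X" "1 \<notin> X \<or> 2 \<notin> X" by auto
  then have "sorted_list_of_set (tt ` X) = map tt (sorted_list_of_set X)"
    by (intro sl_image tt_mono) auto
  with Cons show ?case by simp
qed simp

lemma lsign_tt:
  assumes g: "good n xs" and n: "n \<ge> 2"
  shows "lsign n (map tt xs) = - lsign n xs"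
proof -
  have len: "length xs = n" using good_length[OF g] .
  have e: "pl n (map tt xs) = tt \<circ> pl n xs"
  proof
    fix j show "pl n (map tt xs) j = (tt \<circ> pl n xs) j"
    proof (cases "j \<in> {1..n}")
      case True
      then have "j - 1 < length xs" using len by auto
      then show ?thesis using True by (simp add: pl_def)
    next
      case False
      then have "j \<noteq> 1" "j \<noteq> 2" using n by auto
      then show ?thesis using False unfolding pl_def by auto
    qed
  qed
  show ?thesis unfolding lsign_def e
    by (subst sign_compose[OF permutation_swap_id pl_perm[OF g]]) (simp add: sign_swap_id)
qed


lemma tt_tt_img[simp]: "tt ` tt ` X = X"
  by (simp add: image_comp)

lemma caseC:
  assumes p: "p \<in> Qset n" and n: "n \<ge> 2" and c1: "{1,2} \<notin> p" and c2: "\<not> {1,2} \<subseteq> odd_block p"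
  defines "q \<equiv> (`) tt ` p"
  shows "q \<in> Qset n" "{1,2} \<notin> q" "\<not> {1,2} \<subseteq> odd_block q" "(`) tt ` q = p"
    "eps_part n q * eps2 q = - (eps_part n p * eps2 p)"
proof -
  define I where "I = odd_block p"
  have pp: "partition_on {1..n} p" using p by (simp add: Qset_def)
  have I: "I \<in> p" "odd (card I)" "\<forall>J\<in>p. J \<noteq> I \<longrightarrow> card J = 2" using Qset_odd[OF p] I_def by auto
  have nb: "\<not> {1,2} \<subseteq> X" if X: "X \<in> p" for X
  proof
    assume sub: "{1,2} \<subseteq> X"
    show False
    proof (cases "X = I")
      case True then show False using sub c2 I_def by simp
    next
      case False
      then have "card X = 2" using I X by auto
      moreover have "finite X" using part_blocks[OF pp X] by simp
      ultimately have "{1,2} = X" using card_subset_eq[OF _ sub] by simp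
      then show False using X c1 by simp
    qed
  qed
  have img: "tt ` {1..n} = {1..n}" using n by (intro transpose_image_eq) auto
  have ne: "{} \<notin> p" using pp partition_onD3 by blast
  have "partition_on (tt ` {1..n}) ((`) tt ` p - {{}})"
    by (rule partition_on_inj_image[OF pp]) simp
  moreover have "(`) tt ` p - {{}} = q" using ne unfolding q_def by auto
  ultimately have pq: "partition_on {1..n} q" using img by simp
  have cardtt: "card (tt ` X) = card X" for X by (simp add: card_image)
  have Q: "q \<in> Qset n" "odd_block q = tt ` I"
    by (rule QsetI[OF pq, of "tt ` I"]; use I cardtt in \<open>auto simp: q_def\<close>)+
  show "q \<in> Qset n" by (rule Q(1))
  show "{1,2} \<notin> q"
  proof
    assume "{1,2} \<in> q"
    then obtain X where X: "X \<in> p" "tt ` X = {1,2}" unfolding q_def by auto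
    then have "X = tt ` {1,2}" by (metis tt_tt_img)
    then have "X = {1,2}" by (simp add: insert_commute)
    then show False using X c1 by simp
  qed
  show "\<not> {1,2} \<subseteq> odd_block q"
  proof
    assume "{1,2} \<subseteq> odd_block q"
    then have "tt ` {1,2} \<subseteq> tt ` tt ` I" using Q(2) by (intro image_mono) simp
    moreover have "tt ` tt ` I = I" by (rule tt_tt_img)
    ultimately have "{1,2} \<subseteq> I" by (simp add: insert_commute)
    then show False using c2 I_def by simp
  qed
  show "(`) tt ` q = p" unfolding q_def by (simp add: image_comp)
  obtain Is where Is: "distinct Is" "set Is = p" using finite_distinct_list[OF part_finite[OF pp]] by blast
  have gI: "good n (L Is)" by (rule good_L[OF pp Is])
  have dq: "distinct (map ((`) tt) Is)" using Is(1)
    by (simp add: distinct_map inj_on_def inj_image_eq_iff[OF inj_transpose])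
  have sq: "set (map ((`) tt) Is) = q" using Is(2) q_def by simp
  have "eps_part n q = lsign n (L (map ((`) tt) Is))" by (rule eps_part_eq[OF Q(1) dq sq])
  also have "L (map ((`) tt) Is) = map tt (L Is)"
    by (rule L_tt) (use Is part_blocks[OF pp] nb in auto)
  also have "lsign n (map tt (L Is)) = - lsign n (L Is)" by (rule lsign_tt[OF gI n])
  also have "lsign n (L Is) = eps_part n p" using eps_part_eq[OF p Is] by simp
  finally have e1: "eps_part n q = - eps_part n p" .
  have "eps2 q = eps2 p" unfolding eps2_def Q(2) I_def[symmetric] cardtt ..
  with e1 show "eps_part n q * eps2 q = - (eps_part n p * eps2 p)" by simp
qed


lemma sl_ins:
  assumes "finite A" "\<forall>y\<in>A. x < y"
  shows "sorted_list_of_set (insert x A) = x # sorted_list_of_set A"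
proof -
  have "x \<notin> A" using assms by auto
  then show ?thesis
    by (intro sorted_list_of_set_unique[THEN iffD1])
       (use assms in \<open>auto simp: length_sorted_list_of_set\<close>)
qed

definition split12 :: "nat set set \<Rightarrow> nat set set" where
  "split12 p = insert {1,2} (insert (odd_block p - {1,2}) (p - {odd_block p}))"

definition merge12 :: "nat set set \<Rightarrow> nat set set" where
  "merge12 p = insert (odd_block p \<union> {1,2}) (p - {odd_block p, {1,2}})"

lemma caseB:
  assumes p: "p \<in> Qset n" and c1: "{1,2} \<notin> p" and c2: "{1,2} \<subseteq> odd_block p"
  defines "q \<equiv> split12 p"
  shows "q \<in> Qset n" "{1,2} \<in> q" "merge12 q = p"
    "eps_part n q * eps2 q = - (eps_part n p * eps2 p)"
proof -
  define I where "I = odd_block p"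
  define I' where "I' = I - {1,2}"
  have pp: "partition_on {1..n} p" using p by (simp add: Qset_def)
  have I: "I \<in> p" "odd (card I)" "\<forall>J\<in>p. J \<noteq> I \<longrightarrow> card J = 2" using Qset_odd[OF p] I_def by auto
  have Ib: "I \<subseteq> {1..n}" "finite I" "I \<noteq> {}" using part_blocks[OF pp I(1)] by auto
  have sub: "{1,2} \<subseteq> I" using c2 I_def by simp
  have "card {1,2::nat} \<le> card I" by (rule card_mono[OF Ib(2) sub])
  then have c3: "card I \<ge> 3" using I(2) by (cases "card I = 2") auto
  have cI': "card I' = card I - 2" unfolding I'_def using sub Ib(2) by (simp add: card_Diff_subset)
  have I'ne: "I' \<noteq> {}" using cI' c3 by auto
  have I'12: "I' \<noteq> {1,2}" "1 \<notin> I'" "2 \<notin> I'" unfolding I'_def by auto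
  have disI: "X \<inter> I = {}" if "X \<in> p" "X \<noteq> I" for X using part_disj[OF pp that(1) I(1) that(2)] .
  have I'np: "I' \<notin> p"
  proof
    assume "I' \<in> p"
    moreover have "I' \<noteq> I" using sub I'_def by auto
    ultimately have "I' \<inter> I = {}" using disI by blast
    then show False using I'ne I'_def by auto
  qed
  have qd: "q = insert {1,2} (insert I' (p - {I}))" unfolding q_def split12_def I'_def I_def ..
  have U: "\<Union>q = {1..n}"
  proof -
    have "\<Union>q = {1,2} \<union> I' \<union> \<Union>(p - {I})" using qd by auto
    also have "\<dots> = I \<union> \<Union>(p - {I})" using sub I'_def by auto
    also have "\<dots> = \<Union>p" using I(1) by auto
    finally show ?thesis using partition_onD1[OF pp] by simp
  qed
  have pq: "partition_on {1..n} q"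
  proof (rule partition_onI[OF U])
    fix X Y assume X: "X \<in> q" and Y: "Y \<in> q" and XY: "X \<noteq> Y"
    have d12: "disjnt {1,2} Z" if "Z \<in> p - {I}" for Z using disI[of Z] sub that by (auto simp: disjnt_def)
    have d': "disjnt I' Z" if "Z \<in> p - {I}" for Z using disI[of Z] I'_def that by (auto simp: disjnt_def)
    have dpp: "disjnt Z W" if "Z \<in> p - {I}" "W \<in> p - {I}" "Z \<noteq> W" for Z W
      using part_disj[OF pp, of Z W] that by (auto simp: disjnt_def)
    have d0: "disjnt {1,2} I'" using I'12 by (auto simp: disjnt_def)
    have X3: "X = {1,2} \<or> X = I' \<or> X \<in> p - {I}" and Y3: "Y = {1,2} \<or> Y = I' \<or> Y \<in> p - {I}"
      using X Y unfolding qd by blast+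
    show "disjnt X Y"
      using X3 Y3 XY d12 d' dpp d0 disjnt_sym by metis
  next
    show "{} \<notin> q" using qd I'ne partition_onD3[OF pp] by auto
  qed
  have Q: "q \<in> Qset n" "odd_block q = I'"
    by (rule QsetI[OF pq, of I']; use I cI' c3 qd in auto)+
  show "q \<in> Qset n" by (rule Q(1))
  show "{1,2} \<in> q" using qd by simp
  show "merge12 q = p"
  proof -
    have "merge12 q = insert (I' \<union> {1,2}) (q - {I', {1,2}})" unfolding merge12_def Q(2) ..
    also have "I' \<union> {1,2} = I" using sub I'_def by auto
    also have "q - {I', {1,2}} = p - {I}" using qd I'np c1 I'12 by auto
    also have "insert I (p - {I}) = p" using I(1) by auto
    finally show ?thesis .
  qed
  obtain Rs where Rs: "distinct Rs" "set Rs = p - {I}"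
    using finite_distinct_list[of "p - {I}"] part_finite[OF pp] by auto
  have e1: "eps_part n p = lsign n (L (I # Rs))"
    by (rule eps_part_eq[OF p]) (use Rs I(1) in auto)
  have e2: "eps_part n q = lsign n (L ({1,2} # I' # Rs))"
    by (rule eps_part_eq[OF Q(1)]) (use Rs I'np c1 I'12 qd in auto)
  have fI': "finite I'" using Ib(2) I'_def by simp
  have gt: "\<forall>y\<in>I'. 2 < y"
  proof
    fix y assume y: "y \<in> I'"
    then have "y \<ge> 1" "y \<noteq> 1" "y \<noteq> 2" using Ib(1) I'_def by auto
    then show "2 < y" by linarith
  qed
  have "I = insert 1 (insert 2 I')" using sub I'_def by auto
  moreover have "sorted_list_of_set (insert 1 (insert 2 I')) = 1 # sorted_list_of_set (insert 2 I')"
    by (rule sl_ins) (use fI' gt in auto)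
  moreover have "sorted_list_of_set (insert 2 I') = 2 # sorted_list_of_set I'"
    by (rule sl_ins[OF fI' gt])
  ultimately have "sorted_list_of_set I = 1 # 2 # sorted_list_of_set I'" by simp
  moreover have "sorted_list_of_set {1,2::nat} = [1,2]"
    using sl_ins[of "{2::nat}" 1] by simp
  ultimately have "L (I # Rs) = L ({1,2} # I' # Rs)" by simp
  then have ee: "eps_part n q = eps_part n p" using e1 e2 by simp
  obtain m where m: "card I = 2 * m + 1" using I(2) by (rule oddE)
  define k where "k = m - 1"
  have k: "card I = 2 * k + 3" using m c3 unfolding k_def by auto
  have "eps2 q = (-1) ^ k" unfolding eps2_def Q(2) cI' k by simp
  moreover have "eps2 p = (-1) ^ Suc k" unfolding eps2_def I_def[symmetric] k by simp
  ultimately show "eps_part n q * eps2 q = - (eps_part n p * eps2 p)" using ee by simp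
qed


lemma caseA:
  assumes p: "p \<in> Qset n" and c1: "{1,2} \<in> p"
  defines "q \<equiv> merge12 p"
  shows "q \<in> Qset n" "{1,2} \<notin> q" "{1,2} \<subseteq> odd_block q" "split12 q = p"
proof -
  define I where "I = odd_block p"
  define K where "K = I \<union> {1,2}"
  have pp: "partition_on {1..n} p" using p by (simp add: Qset_def)
  have I: "I \<in> p" "odd (card I)" "\<forall>J\<in>p. J \<noteq> I \<longrightarrow> card J = 2" using Qset_odd[OF p] I_def by auto
  have Ib: "I \<subseteq> {1..n}" "finite I" "I \<noteq> {}" using part_blocks[OF pp I(1)] by auto
  have I12: "I \<noteq> {1,2}" using I(2) by auto
  have dI12: "I \<inter> {1,2} = {}" using part_disj[OF pp I(1) c1 I12] .
  have disI: "X \<inter> I = {}" if "X \<in> p" "X \<noteq> I" for X using part_disj[OF pp that(1) I(1) that(2)] .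
  have dis12: "X \<inter> {1,2} = {}" if "X \<in> p" "X \<noteq> {1,2}" for X using part_disj[OF pp that(1) c1 that(2)] .
  have Knp: "K \<notin> p"
  proof
    assume "K \<in> p"
    moreover have "K \<noteq> I" using K_def dI12 by auto
    ultimately have "K \<inter> I = {}" using disI by blast
    then show False using Ib(3) K_def by auto
  qed
  have K12: "K \<noteq> {1,2}"
  proof
    assume K: "K = {1,2}"
    obtain x where x: "x \<in> I" using Ib(3) by blast
    then have "x \<in> K" using K_def by simp
    then show False using K x dI12 by blast
  qed
  have qd: "q = insert K (p - {I, {1,2}})" unfolding q_def merge12_def K_def I_def ..
  have U: "\<Union>q = {1..n}"
  proof -
    have "\<Union>q = I \<union> {1,2} \<union> \<Union>(p - {I, {1,2}})" using qd K_def by auto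
    also have "\<dots> = \<Union>p" using I(1) c1 by auto
    finally show ?thesis using partition_onD1[OF pp] by simp
  qed
  have pq: "partition_on {1..n} q"
  proof (rule partition_onI[OF U])
    fix X Y assume X: "X \<in> q" and Y: "Y \<in> q" and XY: "X \<noteq> Y"
    have dK: "disjnt K Z" if "Z \<in> p - {I, {1,2}}" for Z using disI[of Z] dis12[of Z] that K_def
      by (auto simp: disjnt_def)
    have dpp: "disjnt Z W" if "Z \<in> p - {I, {1,2}}" "W \<in> p - {I, {1,2}}" "Z \<noteq> W" for Z W
      using part_disj[OF pp, of Z W] that by (auto simp: disjnt_def)
    have X3: "X = K \<or> X \<in> p - {I, {1,2}}" and Y3: "Y = K \<or> Y \<in> p - {I, {1,2}}"
      using X Y unfolding qd by blast+
    show "disjnt X Y" using X3 Y3 XY dK dpp disjnt_sym by metis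
  next
    show "{} \<notin> q" using qd K_def partition_onD3[OF pp] by auto
  qed
  have cK: "card K = card I + 2" unfolding K_def using dI12 Ib(2) by (subst card_Un_disjoint) auto
  have Q: "q \<in> Qset n" "odd_block q = K"
    by (rule QsetI[OF pq, of K]; use I cK qd in auto)+
  show "q \<in> Qset n" by (rule Q(1))
  show "{1,2} \<notin> q" using qd K12 by auto
  show "{1,2} \<subseteq> odd_block q" using Q(2) K_def by auto
  show "split12 q = p"
  proof -
    have "split12 q = insert {1,2} (insert (K - {1,2}) (q - {K}))" unfolding split12_def Q(2) ..
    also have "K - {1,2} = I" using K_def dI12 by auto
    also have "q - {K} = p - {I, {1,2}}" using qd Knp by auto
    also have "insert {1,2} (insert I (p - {I, {1,2}})) = p" using I(1) c1 by auto
    finally show ?thesis .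
  qed
qed

definition gg :: "nat set set \<Rightarrow> nat set set" where
  "gg p = (if {1,2} \<in> p then merge12 p else if {1,2} \<subseteq> odd_block p then split12 p else (`) tt ` p)"

lemma gg_props:
  assumes p: "p \<in> Qset n" and n: "n \<ge> 2"
  shows "gg p \<in> Qset n \<and> gg (gg p) = p \<and> eps_part n (gg p) * eps2 (gg p) = - (eps_part n p * eps2 p)"
proof (cases "{1,2} \<in> p")
  case True
  note A = caseA[OF p True]
  have g1: "gg p = merge12 p" using True by (simp only: gg_def if_True)
  have g2: "gg (merge12 p) = split12 (merge12 p)" using A(2) A(3) by (simp only: gg_def if_False if_True)
  have "eps_part n (split12 (merge12 p)) * eps2 (split12 (merge12 p)) =
      - (eps_part n (merge12 p) * eps2 (merge12 p))"
    by (rule caseB(4)[OF A(1) A(2) A(3)])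
  then show ?thesis using A g1 g2 by simp
next
  case F: False
  show ?thesis
  proof (cases "{1,2} \<subseteq> odd_block p")
    case True
    note B = caseB[OF p F True]
    have g1: "gg p = split12 p" using F True by (simp only: gg_def if_False if_True)
    have g2: "gg (split12 p) = merge12 (split12 p)" using B(2) by (simp only: gg_def if_True)
    show ?thesis using B g1 g2 by simp
  next
    case False
    note C = caseC[OF p n F False]
    have g1: "gg p = (`) tt ` p" using F False by (simp only: gg_def if_False)
    have g2: "gg ((`) tt ` p) = (`) tt ` (`) tt ` p" using C(2) C(3) by (simp only: gg_def if_False)
    show ?thesis using C g1 g2 by simp
  qed
qed

theorem mainTheorem11:
  fixes n :: nat
  assumes "n \<ge> 3" and "odd n"
  shows "(\<Sum>p\<in>Qset n. eps_part n p * eps2 p) = 0"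
proof -
  define F where "F p = eps_part n p * eps2 p" for p
  have n: "n \<ge> 2" using assms by simp
  have bij: "bij_betw gg (Qset n) (Qset n)"
    by (rule bij_betw_byWitness[where f' = gg]) (use gg_props[OF _ n] in auto)
  have "sum F (Qset n) = sum (\<lambda>p. F (gg p)) (Qset n)"
    by (rule sum.reindex_bij_betw[OF bij, symmetric])
  also have "\<dots> = sum (\<lambda>p. - F p) (Qset n)"
    by (rule sum.cong) (use gg_props[OF _ n] in \<open>auto simp: F_def\<close>)
  also have "\<dots> = - sum F (Qset n)" by (simp add: sum_negf)
  finally have "sum F (Qset n) = 0" by simp
  then show ?thesis by (simp add: F_def)
qed

end
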